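(* Let $X$ be a metric space, let $A\subseteq X$ be nonempty and let $Y$ be a hyperconvex metric space. Then for every $f\in\mathcal{N}(A,Y)$, the set $\Phi_c(f)$ of all $f'\in\mathcal{N}(X,Y)$ with $f'|_A=f$ and $f'(X)\subseteq\mathrm{cov}(f(A))$ is externally hyperconvex in $(\mathcal{N}(X,Y),d_\infty)$.
   Context: A metric space $Y$ is hyperconvex if $\bigcap_\alpha B(x_\alpha,r_\alpha)\ne\emptyset$ for every family of points $x_\alpha$ and $r_\alpha>0$ with $d(x_\alpha,x_\beta)\le r_\alpha+r_\beta$ ($B$ = closed ball). A subset $E$ of a metric space $Z$ is externally hyperconvex if for any family $\{x_\alpha\}\subseteq Z$ and reals $\{r_\alpha\}$ with $d(x_\alpha,x_\beta)\le r_\alpha+r_\beta$ and $\mathrm{dist}(x_\alpha,E)\le r_\alpha$, one has $\bigcap_\alpha B(x_\alpha,r_\alpha)\cap E\ne\emptyset$. For nonempty bounded $D\subseteq Y$, $\mathrm{cov}(D)$ is the intersection of all closed balls containing $D$. $\mathcal{N}(X,Y)$ is the set of bounded nonexpansive maps with supremum metric $d_\infty$. *)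

theory Defs
  imports "HOL-Analysis.Analysis"
begin

text \<open>Hyperconvexity of a subset Y of a metric space (families of points with radii
  are represented by the set F of pairs (point, radius)).\<close>
definition hyperconvex :: "'b::metric_space set \<Rightarrow> bool" where
  "hyperconvex Y \<longleftrightarrow>
     (\<forall>F :: ('b \<times> real) set.
        fst ` F \<subseteq> Y \<and> (\<forall>(x,r)\<in>F. r > 0) \<and>
        (\<forall>(x,r)\<in>F. \<forall>(y,s)\<in>F. dist x y \<le> r + s)
        \<longrightarrow> (\<exists>z\<in>Y. \<forall>(x,r)\<in>F. dist x z \<le> r))"

definition ext_hyperconvex :: "'a set \<Rightarrow> ('a \<Rightarrow> 'a \<Rightarrow> real) \<Rightarrow> 'a set \<Rightarrow> bool" where
  "ext_hyperconvex M d E \<longleftrightarrow> E \<subseteq> M \<and>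
     (\<forall>F :: ('a \<times> real) set.
        fst ` F \<subseteq> M \<and>
        (\<forall>(x,r)\<in>F. \<forall>(y,s)\<in>F. d x y \<le> r + s) \<and>
        (\<forall>(x,r)\<in>F. (INF e\<in>E. d x e) \<le> r)
        \<longrightarrow> (\<exists>z\<in>E. \<forall>(x,r)\<in>F. d x z \<le> r))"

definition cov :: "'b::metric_space set \<Rightarrow> 'b set" where
  "cov D = \<Inter> {cball c r | c r. D \<subseteq> cball c r}"

text \<open>Bounded nonexpansive maps defined on S (values outside S are irrelevant).\<close>
definition nonexp_maps :: "'a::metric_space set \<Rightarrow> ('a \<Rightarrow> 'b::metric_space) set" where
  "nonexp_maps S = {f. bounded (f ` S) \<and> (\<forall>x\<in>S. \<forall>y\<in>S. dist (f x) (f y) \<le> dist x y)}"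

definition sup_dist :: "'a set \<Rightarrow> ('a \<Rightarrow> 'b::metric_space) \<Rightarrow> ('a \<Rightarrow> 'b) \<Rightarrow> real" where
  "sup_dist S f g = (SUP x\<in>S. dist (f x) (g x))"

definition Phi_c :: "'a::metric_space set \<Rightarrow> ('a \<Rightarrow> 'b::metric_space) \<Rightarrow> ('a \<Rightarrow> 'b) set" where
  "Phi_c A f = {f' \<in> nonexp_maps UNIV. (\<forall>x\<in>A. f' x = f x) \<and> range f' \<subseteq> cov (f ` A)}"

end

theory Submission
  imports Defs
begin

lemma hc0:
  assumes "hyperconvex (UNIV::'b::metric_space set)"
    and "\<forall>(x,r)\<in>F. r \<ge> 0"
    and "\<forall>(x,r)\<in>F. \<forall>(y,s)\<in>F. dist x y \<le> r + s"
  shows "\<exists>z::'b. \<forall>(x,r)\<in>F. dist x z \<le> r"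
proof (cases "\<exists>x. (x,0) \<in> F")
  case True
  then obtain x where x: "(x,0) \<in> F" by blast
  show ?thesis
  proof (intro exI ballI, clarify)
    fix y s assume "(y,s) \<in> F"
    with x assms(3) have "dist x y \<le> 0 + s" by fastforce
    then show "dist y x \<le> s" by (simp add: dist_commute)
  qed
next
  case False
  with assms(2) have pos: "\<forall>(x,r)\<in>F. r > 0" by fastforce
  have H: "fst ` F \<subseteq> UNIV \<and> (\<forall>(x,r)\<in>F. r > 0) \<and>
        (\<forall>(x,r)\<in>F. \<forall>(y,s)\<in>F. dist x y \<le> r + s)
        \<longrightarrow> (\<exists>z\<in>UNIV. \<forall>(x,r)\<in>F. dist x z \<le> r)"
    using assms(1) unfolding hyperconvex_def by (rule spec)
  have "\<exists>z\<in>UNIV. \<forall>(x,r)\<in>F. dist x z \<le> r"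
    by (rule mp[OF H]) (use pos assms(3) in simp)
  then show ?thesis by simp
qed

lemma pw1: "\<forall>(x,y)\<in>P. R x y \<Longrightarrow> (a,b) \<in> P \<Longrightarrow> R a b"
  by auto

lemma pw2: "\<forall>(x,y)\<in>P. \<forall>(x',y')\<in>P'. R x y x' y' \<Longrightarrow> (a,b) \<in> P \<Longrightarrow> (c,d) \<in> P' \<Longrightarrow> R a b c d"
  by auto

lemma sup_dist_ge:
  assumes "g \<in> nonexp_maps UNIV" "h \<in> nonexp_maps UNIV"
  shows "dist (g x) (h x) \<le> sup_dist UNIV g h"
proof -
  obtain a e where a: "\<forall>y\<in>range g. dist a y \<le> e" using assms(1) unfolding nonexp_maps_def bounded_def by blast
  obtain b e' where b: "\<forall>y\<in>range h. dist b y \<le> e'" using assms(2) unfolding nonexp_maps_def bounded_def by blast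
  have "\<forall>y. dist (g y) (h y) \<le> e + dist a b + e'"
  proof
    fix y
    have "dist (g y) (h y) \<le> dist (g y) a + dist a (h y)" by (rule dist_triangle)
    also have "dist a (h y) \<le> dist a b + dist b (h y)" by (rule dist_triangle)
    finally have "dist (g y) (h y) \<le> dist a (g y) + (dist a b + dist b (h y))" by (simp add: dist_commute)
    moreover have "dist a (g y) \<le> e" "dist b (h y) \<le> e'" using a b by auto
    ultimately show "dist (g y) (h y) \<le> e + dist a b + e'" by linarith
  qed
  then have "bdd_above (range (\<lambda>y. dist (g y) (h y)))" by (auto intro: bdd_aboveI2)
  then show ?thesis unfolding sup_dist_def by (rule cSUP_upper[OF UNIV_I])
qed

lemma ext_lemma:
  fixes A :: "'a::metric_space set" and f :: "'a \<Rightarrow> 'b::metric_space"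
    and G :: "(('a \<Rightarrow> 'b) \<times> real) set"
  assumes Ane: "A \<noteq> {}"
    and hc: "hyperconvex (UNIV :: 'b set)"
    and fA: "f \<in> nonexp_maps A"
    and G0: "\<forall>(g,r)\<in>G. \<forall>(g',r')\<in>G. \<forall>x. dist (g x) (g' x) \<le> r + r'"
    and G1: "\<forall>(g,r)\<in>G. \<forall>a\<in>A. dist (f a) (g a) \<le> r"
    and G2: "\<forall>(g,r)\<in>G. \<forall>x c s. f ` A \<subseteq> cball c s \<longrightarrow> dist c (g x) \<le> s + r"
    and G4: "\<forall>(g,r)\<in>G. \<forall>x x'. dist (g x) (g x') \<le> dist x x'"
  shows "\<exists>h\<in>Phi_c A f. \<forall>(g,r)\<in>G. \<forall>x. dist (h x) (g x) \<le> r"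
proof -
  define C where "C = {(c,s). f ` A \<subseteq> cball c s}"
  define Q where "Q = {P. (\<lambda>a. (a, f a)) ` A \<subseteq> P \<and>
     (\<forall>(x,y)\<in>P. \<forall>(x',y')\<in>P. dist y y' \<le> dist x x') \<and>
     (\<forall>(x,y)\<in>P. (\<forall>(c,s)\<in>C. dist c y \<le> s) \<and> (\<forall>(g,r)\<in>G. dist y (g x) \<le> r))}"
  have fne: "\<forall>x\<in>A. \<forall>y\<in>A. dist (f x) (f y) \<le> dist x y" and fbd: "bounded (f ` A)"
    using fA unfolding nonexp_maps_def by auto
  have Cnn: "s \<ge> 0" if "(c,s) \<in> C" for c s
  proof -
    obtain a where "a \<in> A" using Ane by blast
    then have "dist c (f a) \<le> s" using that unfolding C_def by auto
    then show ?thesis using zero_le_dist[of c "f a"] by linarith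
  qed
  have Gnn: "r \<ge> 0" if "(g,r) \<in> G" for g r
    using pw2[OF G0 that that] by fastforce
  define P0 where "P0 = (\<lambda>a. (a, f a)) ` A"
  have P0Q: "P0 \<in> Q"
    unfolding Q_def P0_def using fne G1 by (auto simp: C_def)
  have Qpw: "dist b d \<le> dist a c" if "P \<in> Q" "(a,b)\<in>P" "(c,d)\<in>P" for P a b c d
  proof -
    have "\<forall>(x,y)\<in>P. \<forall>(x',y')\<in>P. dist y y' \<le> dist x x'" using that(1) unfolding Q_def by blast
    from pw2[OF this that(2,3)] show ?thesis .
  qed
  have "\<forall>Ch\<in>chains Q. \<exists>U\<in>Q. \<forall>X\<in>Ch. X \<subseteq> U"
  proof
    fix Ch assume Ch: "Ch \<in> chains Q"
    show "\<exists>U\<in>Q. \<forall>X\<in>Ch. X \<subseteq> U"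
    proof (cases "Ch = {}")
      case True then show ?thesis using P0Q by blast
    next
      case False
      have sub: "Ch \<subseteq> Q" and ch: "chain\<^sub>\<subseteq> Ch" using Ch unfolding chains_def by auto
      have "\<Union>Ch \<in> Q"
        unfolding Q_def
      proof (intro CollectI conjI)
        obtain X where "X \<in> Ch" using False by blast
        then show "(\<lambda>a. (a, f a)) ` A \<subseteq> \<Union>Ch" using sub unfolding Q_def by blast
      next
        show "\<forall>(x,y)\<in>\<Union>Ch. \<forall>(x',y')\<in>\<Union>Ch. dist y y' \<le> dist x x'"
        proof (clarify)
          fix x y x' y' X X' assume h: "(x,y) \<in> X" "X \<in> Ch" "(x',y') \<in> X'" "X' \<in> Ch"
          from ch h have "X \<subseteq> X' \<or> X' \<subseteq> X" unfolding chain_subset_def by blast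
          then show "dist y y' \<le> dist x x'"
          proof
            assume "X \<subseteq> X'"
            then have "X' \<in> Q" "(x,y) \<in> X'" using h sub by auto
            then show ?thesis using Qpw[of X' x y x' y'] h by simp
          next
            assume "X' \<subseteq> X"
            then have "X \<in> Q" "(x',y') \<in> X" using h sub by auto
            then show ?thesis using Qpw[of X x y x' y'] h by simp
          qed
        qed
      next
        show "\<forall>(x,y)\<in>\<Union>Ch. (\<forall>(c,s)\<in>C. dist c y \<le> s) \<and> (\<forall>(g,r)\<in>G. dist y (g x) \<le> r)"
          using sub unfolding Q_def by blast
      qed
      then show ?thesis by blast
    qed
  qed
  from Zorn_Lemma2[OF this] obtain M where MQ: "M \<in> Q" and Mmax: "\<forall>X\<in>Q. M \<subseteq> X \<longrightarrow> X = M"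
    by blast
  have Mne: "\<forall>(x,y)\<in>M. \<forall>(x',y')\<in>M. dist y y' \<le> dist x x'"
    and Mc: "\<forall>(x,y)\<in>M. (\<forall>(c,s)\<in>C. dist c y \<le> s)"
    and Mg: "\<forall>(x,y)\<in>M. (\<forall>(g,r)\<in>G. dist y (g x) \<le> r)"
    and MA: "(\<lambda>a. (a, f a)) ` A \<subseteq> M"
    using MQ unfolding Q_def by auto
  have dom: "\<exists>y. (x0,y) \<in> M" for x0
  proof (rule ccontr)
    assume nx: "\<not> (\<exists>y. (x0,y) \<in> M)"
    define H where "H = (\<lambda>(x,y). (y, dist x0 x)) ` M \<union> (\<lambda>(g,r). (g x0, r)) ` G \<union> C"
    have Hnn: "\<forall>(x,r)\<in>H. r \<ge> 0"
      unfolding H_def using Gnn Cnn by auto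
    have key: "dist y y' \<le> s + s'" if "(y,s) \<in> H" "(y',s') \<in> H" for y s y' s'
    proof -
      have MM: "dist y y' \<le> dist x0 x + dist x0 x'" if "(x,y) \<in> M" "(x',y') \<in> M" for x y x' y'
      proof -
        have "dist y y' \<le> dist x x'" using pw2[OF Mne that] .
        also have "\<dots> \<le> dist x0 x + dist x0 x'" by (rule dist_triangle3)
        finally show ?thesis .
      qed
      have MG: "dist y (g x0) \<le> dist x0 x + r" if "(x,y) \<in> M" "(g,r) \<in> G" for x y g r
      proof -
        have "dist y (g x0) \<le> dist y (g x) + dist (g x) (g x0)" by (rule dist_triangle)
        moreover have "dist y (g x) \<le> r" using pw2[OF Mg that] .
        moreover have "dist (g x) (g x0) \<le> dist x x0" using pw1[OF G4 that(2)] by blast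
        ultimately show ?thesis by (simp add: dist_commute)
      qed
      have MC: "dist y c \<le> dist x0 x + s" if "(x,y) \<in> M" "(c,s) \<in> C" for x y c s
      proof -
        have "dist c y \<le> s" using pw2[OF Mc that] .
        then have "dist y c \<le> s" by (simp add: dist_commute)
        then show ?thesis using zero_le_dist[of x0 x] by linarith
      qed
      have GG: "dist (g x0) (g' x0) \<le> r + r'" if "(g,r) \<in> G" "(g',r') \<in> G" for g r g' r'
        using pw2[OF G0 that] by blast
      have GC: "dist (g x0) c \<le> r + s" if "(g,r) \<in> G" "(c,s) \<in> C" for g r c s
      proof -
        have "f ` A \<subseteq> cball c s" using that(2) unfolding C_def by simp
        then have "dist c (g x0) \<le> s + r" using pw1[OF G2 that(1)] by blast
        then show ?thesis by (simp add: dist_commute)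
      qed
      have CC: "dist c c' \<le> s + s'" if "(c,s) \<in> C" "(c',s') \<in> C" for c s c' s'
      proof -
        obtain a where a: "a \<in> A" using Ane by blast
        have "dist c c' \<le> dist c (f a) + dist (f a) c'" by (rule dist_triangle)
        moreover have "dist c (f a) \<le> s" "dist c' (f a) \<le> s'" using that a unfolding C_def by auto
        ultimately show ?thesis by (simp add: dist_commute)
      qed
      have MG': "dist (g x0) y \<le> r + dist x0 x" if "(x,y) \<in> M" "(g,r) \<in> G" for x y g r
        using MG[OF that] by (simp add: dist_commute)
      have MC': "dist c y \<le> s + dist x0 x" if "(x,y) \<in> M" "(c,s) \<in> C" for x y c s
        using MC[OF that] by (simp add: dist_commute)
      have GC': "dist c (g x0) \<le> s + r" if "(g,r) \<in> G" "(c,s) \<in> C" for g r c s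
        using GC[OF that] by (simp add: dist_commute)
      have Hc: "(\<exists>x. (x,y) \<in> M \<and> s = dist x0 x) \<or> (\<exists>g. (g,s) \<in> G \<and> y = g x0) \<or> (y,s) \<in> C"
        if "(y,s) \<in> H" for y s
        using that unfolding H_def by auto
      show ?thesis
        using Hc[OF that(1)] Hc[OF that(2)]
        apply (elim disjE exE conjE)
        using MM MG MC GG GC CC MG' MC' GC'
        by simp_all
    qed
    have Hpw: "\<forall>(y,s)\<in>H. \<forall>(y',s')\<in>H. dist y y' \<le> s + s'"
      using key by blast
    obtain z where z: "\<forall>(x,r)\<in>H. dist x z \<le> r" using hc0[OF hc Hnn Hpw] by blast
    have zM: "dist y z \<le> dist x0 x" if "(x,y) \<in> M" for x y
    proof -
      have "(y, dist x0 x) \<in> H" unfolding H_def using that by (intro UnI1 image_eqI[where x="(x,y)"]) auto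
      from pw1[OF z this] show ?thesis .
    qed
    have zG: "dist (g x0) z \<le> r" if "(g,r) \<in> G" for g r
    proof -
      have "(g x0, r) \<in> H" unfolding H_def using that by (intro UnI1 UnI2 image_eqI[where x="(g,r)"]) auto
      from pw1[OF z this] show ?thesis .
    qed
    have zC: "dist c z \<le> s" if "(c,s) \<in> C" for c s
    proof -
      have "(c, s) \<in> H" unfolding H_def using that by blast
      from pw1[OF z this] show ?thesis .
    qed
    have "insert (x0,z) M \<in> Q"
      unfolding Q_def
    proof (intro CollectI conjI)
      show "(\<lambda>a. (a, f a)) ` A \<subseteq> insert (x0, z) M" using MA by blast
      show "\<forall>(x,y)\<in>insert (x0, z) M. \<forall>(x',y')\<in>insert (x0, z) M. dist y y' \<le> dist x x'"
      proof -
        have "dist y y' \<le> dist x x'" if "(x,y)\<in>insert (x0,z) M" "(x',y')\<in>insert (x0,z) M" for x y x' y'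
          using that pw2[OF Mne, of x y x' y'] zM[of x' y'] zM[of x y] by (auto simp: dist_commute)
        then show ?thesis by blast
      qed
      show "\<forall>(x,y)\<in>insert (x0, z) M. (\<forall>(c,s)\<in>C. dist c y \<le> s) \<and> (\<forall>(g,r)\<in>G. dist y (g x) \<le> r)"
      proof -
        have "(\<forall>(c,s)\<in>C. dist c y \<le> s) \<and> (\<forall>(g,r)\<in>G. dist y (g x) \<le> r)"
          if "(x,y)\<in>insert (x0,z) M" for x y
        proof (cases "(x,y) \<in> M")
          case True then show ?thesis using pw1[OF Mc True] pw1[OF Mg True] by blast
        next
          case False then have "x = x0" "y = z" using that by auto
          then show ?thesis using zC zG by (auto simp: dist_commute)
        qed
        then show ?thesis by blast
      qed
    qed
    with Mmax have "insert (x0,z) M = M" by blast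
    with nx show False by blast
  qed
  define h where "h x = (SOME y. (x,y) \<in> M)" for x
  have hM: "(x, h x) \<in> M" for x unfolding h_def using dom someI_ex by metis
  obtain c0 s0 where c0: "f ` A \<subseteq> cball c0 s0" using fbd bounded_subset_cball by blast
  have hC: "dist c (h x) \<le> s" if "f ` A \<subseteq> cball c s" for c s x
    using Mc hM[of x] that unfolding C_def by blast
  have hP: "h \<in> Phi_c A f"
    unfolding Phi_c_def nonexp_maps_def
  proof (intro CollectI conjI ballI)
    show "bounded (h ` UNIV)"
      using hC[OF c0] by (auto intro!: bounded_subset[OF bounded_cball[of c0 s0]])
    show "dist (h x) (h y) \<le> dist x y" for x y using pw2[OF Mne hM[of x] hM[of y]] .
    show "h a = f a" if "a \<in> A" for a
    proof -
      have "(a, f a) \<in> M" using MA that by blast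
      then have "dist (h a) (f a) \<le> dist a a" using pw2[OF Mne hM[of a]] by blast
      then show ?thesis by simp
    qed
    show "range h \<subseteq> cov (f ` A)"
      unfolding cov_def using hC by auto
  qed
  have hG: "\<forall>(g,r)\<in>G. \<forall>x. dist (h x) (g x) \<le> r"
  proof (clarify)
    fix g r x assume "(g,r) \<in> G"
    from pw2[OF Mg hM[of x] this] show "dist (h x) (g x) \<le> r" .
  qed
  show ?thesis
    apply (rule bexI[where x=h])
     apply (rule hG)
    apply (rule hP)
    done
qed

theorem lemma5p12:
  fixes A :: "'a::metric_space set" and f :: "'a \<Rightarrow> 'b::metric_space"
  assumes "A \<noteq> {}"
    and "hyperconvex (UNIV :: 'b set)"
    and "f \<in> nonexp_maps A"
  shows "ext_hyperconvex (nonexp_maps UNIV) (sup_dist UNIV) (Phi_c A f)"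
  unfolding ext_hyperconvex_def
proof (intro conjI allI impI)
  show "Phi_c A f \<subseteq> nonexp_maps UNIV" by (auto simp: Phi_c_def)
  define E where "E = Phi_c A f"
  have "\<exists>h\<in>Phi_c A f. \<forall>(g,r)\<in>({}::(('a \<Rightarrow> 'b) \<times> real) set). \<forall>x. dist (h x) (g x) \<le> r"
    by (rule ext_lemma[OF assms]) auto
  then have Ene: "E \<noteq> {}" unfolding E_def by blast
  have EN: "e \<in> nonexp_maps UNIV" if "e \<in> E" for e using that by (auto simp: E_def Phi_c_def)
  fix F :: "(('a \<Rightarrow> 'b) \<times> real) set"
  assume "fst ` F \<subseteq> nonexp_maps UNIV \<and>
       (\<forall>(x, r)\<in>F. \<forall>(y, s)\<in>F. sup_dist UNIV x y \<le> r + s) \<and>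
       (\<forall>(x, r)\<in>F. (INF e\<in>Phi_c A f. sup_dist UNIV x e) \<le> r)"
  then have FN: "fst ` F \<subseteq> nonexp_maps UNIV"
    and Fpw: "\<forall>(x, r)\<in>F. \<forall>(y, s)\<in>F. sup_dist UNIV x y \<le> r + s"
    and Finf: "\<forall>(x, r)\<in>F. (INF e\<in>E. sup_dist UNIV x e) \<le> r"
    unfolding E_def by auto
  have gN: "g \<in> nonexp_maps UNIV" if "(g,r) \<in> F" for g r using FN that by force
  have approx: "\<exists>e\<in>E. sup_dist UNIV g e < r + \<epsilon>" if "(g,r) \<in> F" "\<epsilon> > 0" for g r \<epsilon>
  proof -
    have bb: "bdd_below ((\<lambda>e. sup_dist UNIV g e) ` E)"
    proof (rule bdd_belowI2)
      fix e assume "e \<in> E"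
      have "dist (g undefined) (e undefined) \<le> sup_dist UNIV g e"
        by (rule sup_dist_ge[OF gN[OF that(1)] EN[OF \<open>e \<in> E\<close>]])
      then show "0 \<le> sup_dist UNIV g e" using zero_le_dist[of "g undefined" "e undefined"] by linarith
    qed
    have "(INF e\<in>E. sup_dist UNIV g e) < r + \<epsilon>" using pw1[OF Finf that(1)] that(2) by linarith
    then show ?thesis using cINF_less_iff[OF Ene bb] by blast
  qed
  have G1: "\<forall>(g,r)\<in>F. \<forall>a\<in>A. dist (f a) (g a) \<le> r"
  proof (clarify)
    fix g r a assume gr: "(g,r) \<in> F" and a: "a \<in> A"
    show "dist (f a) (g a) \<le> r"
    proof (rule field_le_epsilon)
      fix \<epsilon> :: real assume "\<epsilon> > 0"
      then obtain e where e: "e \<in> E" "sup_dist UNIV g e < r + \<epsilon>" using approx gr by blast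
      have "e a = f a" using e(1) a by (auto simp: E_def Phi_c_def)
      moreover have "dist (g a) (e a) \<le> sup_dist UNIV g e" by (rule sup_dist_ge[OF gN[OF gr] EN[OF e(1)]])
      ultimately show "dist (f a) (g a) \<le> r + \<epsilon>" using e(2) by (simp add: dist_commute)
    qed
  qed
  have G2: "\<forall>(g,r)\<in>F. \<forall>x c s. f ` A \<subseteq> cball c s \<longrightarrow> dist c (g x) \<le> s + r"
  proof (clarify)
    fix g r x c s assume gr: "(g,r) \<in> F" and cs: "f ` A \<subseteq> cball c s"
    show "dist c (g x) \<le> s + r"
    proof (rule field_le_epsilon)
      fix \<epsilon> :: real assume "\<epsilon> > 0"
      then obtain e where e: "e \<in> E" "sup_dist UNIV g e < r + \<epsilon>" using approx gr by blast
      have "e x \<in> cov (f ` A)" using e(1) by (auto simp: E_def Phi_c_def)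
      then have "e x \<in> cball c s" using cs unfolding cov_def by blast
      then have "dist c (e x) \<le> s" by simp
      moreover have "dist (g x) (e x) \<le> sup_dist UNIV g e" by (rule sup_dist_ge[OF gN[OF gr] EN[OF e(1)]])
      moreover have "dist c (g x) \<le> dist c (e x) + dist (e x) (g x)" by (rule dist_triangle)
      ultimately show "dist c (g x) \<le> s + r + \<epsilon>" using e(2) by (simp add: dist_commute)
    qed
  qed
  have G0: "\<forall>(g,r)\<in>F. \<forall>(g',r')\<in>F. \<forall>x. dist (g x) (g' x) \<le> r + r'"
  proof (clarify)
    fix g r g' r' x assume "(g,r) \<in> F" "(g',r') \<in> F"
    then show "dist (g x) (g' x) \<le> r + r'"
      using sup_dist_ge[OF gN gN, of g r g' r' x] pw2[OF Fpw, of g r g' r'] by linarith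
  qed
  have G4: "\<forall>(g,r)\<in>F. \<forall>x x'. dist (g x) (g x') \<le> dist x x'"
    using gN unfolding nonexp_maps_def by blast
  obtain h where h: "h \<in> Phi_c A f" "\<forall>(g,r)\<in>F. \<forall>x. dist (h x) (g x) \<le> r"
    using ext_lemma[OF assms G0 G1 G2 G4] by blast
  show "\<exists>z\<in>Phi_c A f. \<forall>(x,r)\<in>F. sup_dist UNIV x z \<le> r"
  proof (intro bexI[OF _ h(1)] ballI, clarify)
    fix g r assume gr: "(g,r) \<in> F"
    show "sup_dist UNIV g h \<le> r"
      unfolding sup_dist_def
      by (rule cSUP_least) (use h(2) gr in \<open>auto simp: dist_commute\<close>)
  qed
qed

end
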